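(* Let $\Gamma\leq\mathrm{PSL}_2(\mathbb{R})$ be an infinitely generated Fuchsian group containing no elliptic elements. Then $\Gamma$ has no finite geodesic cover (corresponding to any locally finite fundamental domain).
   Context: $\Gamma$ acts on the upper half plane $\mathbb{H}^2$ by Möbius transformations; $d_{\mathbb{H}^2}$ is the hyperbolic metric. A fundamental domain of $\Gamma$ is a closed set $F\subset\mathbb{H}^2$ whose $\Gamma$-translates cover $\mathbb{H}^2$ and whose interior contains no two distinct points of the same $\Gamma$-orbit; it is locally finite if every compact subset of $\mathbb{H}^2$ meets only finitely many translates $\gamma\cdot F$. A subset $\Gamma_0\subset\Gamma$ containing the identity is a geodesic cover of $\Gamma$ corresponding to $F$ if for all $p,q\in F$, $\min_{\gamma\in\Gamma}d_{\mathbb{H}^2}(p,\gamma\cdot q)=\min_{\gamma\in\Gamma_0}d_{\mathbb{H}^2}(p,\gamma\cdot q)$. *)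

theory Defs
  imports "HOL-Analysis.Analysis"
begin

text \<open>Elements of PSL(2,R) are represented by matrices in SL(2,R); a subgroup
  Gamma of PSL(2,R) is represented by its full preimage G in SL(2,R)
  (a subgroup of SL(2,R) containing -I).\<close>

type_synonym mat2 = "real^2^2"

definition SL2 :: "mat2 set" where
  "SL2 = {A. det A = 1}"

definition upper_half_plane :: "complex set" where
  "upper_half_plane = {z. Im z > 0}"

definition mobius :: "mat2 \<Rightarrow> complex \<Rightarrow> complex" where
  "mobius A z = (complex_of_real (A$1$1) * z + complex_of_real (A$1$2)) /
                (complex_of_real (A$2$1) * z + complex_of_real (A$2$2))"

definition hdist :: "complex \<Rightarrow> complex \<Rightarrow> real" where
  "hdist z w = arcosh (1 + (cmod (z - w))^2 / (2 * Im z * Im w))"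

definition psl2_subgroup :: "mat2 set \<Rightarrow> bool" where
  "psl2_subgroup G \<longleftrightarrow> G \<subseteq> SL2 \<and> mat 1 \<in> G \<and> - mat 1 \<in> G \<and>
     (\<forall>A\<in>G. \<forall>B\<in>G. A ** B \<in> G) \<and> (\<forall>A\<in>G. matrix_inv A \<in> G)"

text \<open>Fuchsian group: discrete subgroup of PSL(2,R) (discreteness of the
  image in PSL(2,R) is equivalent to discreteness of the preimage in SL(2,R)).\<close>
definition fuchsian :: "mat2 set \<Rightarrow> bool" where
  "fuchsian G \<longleftrightarrow> psl2_subgroup G \<and>
     (\<forall>A\<in>G. \<exists>e>0. \<forall>B\<in>G. dist A B < e \<longrightarrow> B = A)"

inductive_set generated :: "mat2 set \<Rightarrow> mat2 set" for S where
  gen_one: "mat 1 \<in> generated S"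
| gen_mult: "A \<in> generated S \<Longrightarrow> s \<in> S \<Longrightarrow> A ** s \<in> generated S"
| gen_mult_inv: "A \<in> generated S \<Longrightarrow> s \<in> S \<Longrightarrow> A ** matrix_inv s \<in> generated S"

text \<open>The subgroup of PSL(2,R) with preimage G is finitely generated iff
  G is generated by the lifts of finitely many elements together with -I.\<close>
definition finitely_generated_psl :: "mat2 set \<Rightarrow> bool" where
  "finitely_generated_psl G \<longleftrightarrow>
     (\<exists>S. finite S \<and> S \<subseteq> G \<and> G = generated (insert (- mat 1) S))"

definition elliptic :: "mat2 \<Rightarrow> bool" where
  "elliptic A \<longleftrightarrow> \<bar>trace A\<bar> < 2"

definition fundamental_domain :: "mat2 set \<Rightarrow> complex set \<Rightarrow> bool" where
  "fundamental_domain G F \<longleftrightarrow>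
     F \<subseteq> upper_half_plane \<and> closedin (top_of_set upper_half_plane) F \<and>
     (\<Union>A\<in>G. mobius A ` F) = upper_half_plane \<and>
     (\<forall>z\<in>interior F. \<forall>w\<in>interior F. \<forall>A\<in>G. mobius A z = w \<longrightarrow> z = w)"

definition locally_finite_fd :: "mat2 set \<Rightarrow> complex set \<Rightarrow> bool" where
  "locally_finite_fd G F \<longleftrightarrow> fundamental_domain G F \<and>
     (\<forall>K. compact K \<and> K \<subseteq> upper_half_plane \<longrightarrow>
        finite {A\<in>G. mobius A ` F \<inter> K \<noteq> {}})"

definition geodesic_cover :: "mat2 set \<Rightarrow> complex set \<Rightarrow> mat2 set \<Rightarrow> bool" where
  "geodesic_cover G F G0 \<longleftrightarrow> G0 \<subseteq> G \<and> (mat 1 \<in> G0 \<or> - mat 1 \<in> G0) \<and>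
     (\<forall>p\<in>F. \<forall>q\<in>F. (INF A\<in>G. hdist p (mobius A q)) = (INF A\<in>G0. hdist p (mobius A q)))"

end

theory Submission imports Defs begin

lemma minv: assumes "det (A::mat2) = 1"
  shows "A ** matrix_inv A = mat 1" "matrix_inv A ** A = mat 1"
proof -
  have "invertible A" using assms by (simp add: invertible_det_nz)
  then have "\<exists>A'. A ** A' = mat 1 \<and> A' ** A = mat 1" unfolding invertible_def by blast
  hence "A ** matrix_inv A = mat 1 \<and> matrix_inv A ** A = mat 1"
    unfolding matrix_inv_def by (rule someI_ex)
  thus "A ** matrix_inv A = mat 1" "matrix_inv A ** A = mat 1" by auto
qed

lemma neg_mul: "(- mat 1) ** (A::mat2) = - A"
  by (simp add: vec_eq_iff matrix_matrix_mult_def sum_2 mat_def forall_2)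

lemma mul_entries: "((A::mat2) ** B)$i$j = A$i$1 * B$1$j + A$i$2 * B$2$j"
  by (simp add: matrix_matrix_mult_def sum_2)

lemma trace2: "trace (A::mat2) = A$1$1 + A$2$2"
  by (simp add: trace_def sum_2)

lemma denom_nz: assumes "A \<in> SL2" "z \<in> upper_half_plane"
  shows "complex_of_real (A$2$1) * z + complex_of_real (A$2$2) \<noteq> 0"
proof
  assume h: "complex_of_real (A$2$1) * z + complex_of_real (A$2$2) = 0"
  have "Im z > 0" using assms(2) by (simp add: upper_half_plane_def)
  from arg_cong[OF h, of Im] have "A$2$1 * Im z = 0" by simp
  hence c: "A$2$1 = 0" using \<open>Im z > 0\<close> by simp
  from arg_cong[OF h, of Re] c have "A$2$2 = 0" by simp
  with c assms(1) show False by (simp add: SL2_def det_2)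
qed

lemma Im_mobius: assumes "A \<in> SL2" "z \<in> upper_half_plane"
  shows "mobius A z \<in> upper_half_plane"
proof -
  let ?a = "A$1$1" and ?b = "A$1$2" and ?c = "A$2$1" and ?d = "A$2$2"
  have d: "?a * ?d - ?b * ?c = 1" using assms(1) by (simp add: SL2_def det_2)
  have y: "Im z > 0" using assms(2) by (simp add: upper_half_plane_def)
  have nz: "complex_of_real ?c * z + complex_of_real ?d \<noteq> 0" by (rule denom_nz[OF assms])
  hence pos: "(Re (complex_of_real ?c * z + complex_of_real ?d))^2 + (Im (complex_of_real ?c * z + complex_of_real ?d))^2 > 0"
    by (simp add: complex_eq_iff sum_power2_gt_zero_iff)
  have num: "Im (complex_of_real ?a * z + complex_of_real ?b) * Re (complex_of_real ?c * z + complex_of_real ?d)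
     - Re (complex_of_real ?a * z + complex_of_real ?b) * Im (complex_of_real ?c * z + complex_of_real ?d) = (?a * ?d - ?b * ?c) * Im z"
    by (simp add: algebra_simps)
  show ?thesis unfolding mobius_def upper_half_plane_def
    using pos num d y by (simp add: Im_divide)
qed

lemma frac_comp: "(d::complex) \<noteq> 0 \<Longrightarrow> (a*(n/d)+b)/(c*(n/d)+e) = (a*n+b*d)/(c*n+e*d)"
proof -
  assume "d \<noteq> 0"
  have "(a*(n/d)+b) = (a*n+b*d)/d" "(c*(n/d)+e) = (c*n+e*d)/d" using \<open>d \<noteq> 0\<close> by (simp_all add: field_simps)
  thus ?thesis using \<open>d \<noteq> 0\<close> by simp
qed

lemma mobius_mult: assumes "B \<in> SL2" "z \<in> upper_half_plane"
  shows "mobius (A ** B) z = mobius A (mobius B z)"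
proof -
  have nz: "complex_of_real (B$2$1) * z + complex_of_real (B$2$2) \<noteq> 0" by (rule denom_nz[OF assms])
  show ?thesis unfolding mobius_def mul_entries frac_comp[OF nz]
    by (simp add: algebra_simps)
qed

lemma mobius_id: "mobius (mat 1) z = z"
  by (simp add: mobius_def mat_def)


lemma mul_neg: "(A::mat2) ** (- mat 1) = - A"
  by (simp add: vec_eq_iff matrix_matrix_mult_def sum_2 mat_def forall_2)

lemma fix_pm: assumes "A \<in> SL2" "\<not> elliptic A" "z \<in> upper_half_plane" "mobius A z = z"
  shows "A = mat 1 \<or> A = - mat 1"
proof -
  define a where "a = A$1$1"
  define b where "b = A$1$2"
  define c where "c = A$2$1"
  define d where "d = A$2$2"
  define x where "x = Re z"
  define y where "y = Im z"
  have det: "a * d - b * c = 1" using assms(1) by (simp add: SL2_def det_2 a_def b_def c_def d_def)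
  have tr: "\<not> \<bar>a + d\<bar> < 2" using assms(2) by (simp add: elliptic_def trace2 a_def d_def)
  have yp: "y > 0" using assms(3) by (simp add: upper_half_plane_def y_def)
  have nz: "complex_of_real c * z + complex_of_real d \<noteq> 0" using denom_nz[OF assms(1,3)] by (simp add: c_def d_def)
  have "complex_of_real a * z + complex_of_real b = z * (complex_of_real c * z + complex_of_real d)"
    using assms(4) nz by (simp add: mobius_def a_def b_def c_def d_def divide_eq_eq mult.commute)
  then have re: "a * x + b = c * (x^2 - y^2) + d * x" and im: "a * y = 2 * c * x * y + d * y"
    by (auto simp: complex_eq_iff x_def y_def power2_eq_square algebra_simps)
  from im yp have ad: "a = 2 * c * x + d"
    by (metis (no_types, opaque_lifting) distrib_right less_irrefl mult_cancel_right)
  have bb: "b = - c * (x^2 + y^2)" using re ad by (simp add: algebra_simps power2_eq_square)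
  show ?thesis
  proof (cases "c = 0")
    case True
    with ad bb have "a = d" "b = 0" by auto
    with det True have "a * a = 1" by simp
    hence "a = 1 \<or> a = -1" by (metis mult_cancel_left1 square_eq_1_iff)
    thus ?thesis using \<open>a = d\<close> \<open>b = 0\<close> True
      by (auto simp: vec_eq_iff forall_2 mat_def a_def b_def c_def d_def)
  next
    case False
    have "(a + d)^2 = 4 * (d * d + 2 * c * d * x + c^2 * x^2)" using ad by (simp add: power2_eq_square algebra_simps)
    also have "d * d + 2 * c * d * x + c^2 * x^2 = 1 - c^2 * y^2"
      using det ad bb by (simp add: power2_eq_square algebra_simps)
    finally have e: "(a + d)^2 = 4 - 4 * c^2 * y^2" by simp
    have "c^2 * y^2 > 0" using False yp by simp
    hence "(a + d)^2 < 2^2" using e by simp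
    hence "\<bar>a + d\<bar>^2 < 2^2" by (simp only: power2_abs)
    hence "\<bar>a + d\<bar> < 2" by (rule power_less_imp_less_base) simp
    with tr show ?thesis by simp
  qed
qed

lemma hdist_self: "hdist p p = 0"
  by (simp add: hdist_def)

lemma hdist_nonneg: assumes "p \<in> upper_half_plane" "w \<in> upper_half_plane"
  shows "hdist p w \<ge> 0"
proof -
  have "Im p > 0" "Im w > 0" using assms by (auto simp: upper_half_plane_def)
  hence "(cmod (p - w))^2 / (2 * Im p * Im w) \<ge> 0" by simp
  thus ?thesis unfolding hdist_def by simp
qed

lemma hdist_zero: assumes "p \<in> upper_half_plane" "w \<in> upper_half_plane" "hdist p w = 0"
  shows "p = w"
proof -
  have "Im p > 0" "Im w > 0" using assms by (auto simp: upper_half_plane_def)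
  hence q: "(cmod (p - w))^2 / (2 * Im p * Im w) \<ge> 0" by simp
  hence "1 + (cmod (p - w))^2 / (2 * Im p * Im w) = 1" using assms(3) unfolding hdist_def by simp
  hence "(cmod (p - w))^2 = 0" using \<open>Im p > 0\<close> \<open>Im w > 0\<close> by simp
  thus ?thesis by simp
qed

lemma mobius_cont: assumes "A \<in> SL2" shows "continuous_on upper_half_plane (mobius A)"
  unfolding mobius_def by (intro continuous_intros) (use denom_nz[OF assms] in auto)

lemma translate_closed:
  assumes B: "B \<in> SL2" and A': "A' \<in> SL2" and i1: "B ** A' = mat 1" and i2: "A' ** B = mat 1"
    and F: "F \<subseteq> upper_half_plane" "closedin (top_of_set upper_half_plane) F"
  shows "closedin (top_of_set upper_half_plane) (mobius B ` F)"
proof -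
  obtain C where C: "closed C" "F = upper_half_plane \<inter> C" using F(2) by (auto simp: closedin_closed)
  have "mobius B ` F = upper_half_plane \<inter> mobius A' -` C"
  proof
    show "mobius B ` F \<subseteq> upper_half_plane \<inter> mobius A' -` C"
    proof
      fix w assume "w \<in> mobius B ` F"
      then obtain f where f: "f \<in> F" "w = mobius B f" by auto
      have fH: "f \<in> upper_half_plane" using f F by auto
      have "mobius A' w = f" using f mobius_mult[OF B fH, of A'] i2 by (simp add: mobius_id)
      thus "w \<in> upper_half_plane \<inter> mobius A' -` C" using f C Im_mobius[OF B fH] by auto
    qed
  next
    show "upper_half_plane \<inter> mobius A' -` C \<subseteq> mobius B ` F"
    proof
      fix w assume w: "w \<in> upper_half_plane \<inter> mobius A' -` C"
      hence wH: "w \<in> upper_half_plane" by auto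
      have "mobius A' w \<in> F" using w C Im_mobius[OF A' wH] by auto
      moreover have "w = mobius B (mobius A' w)" using mobius_mult[OF A' wH, of B] i1 by (simp add: mobius_id)
      ultimately show "w \<in> mobius B ` F" by blast
    qed
  qed
  thus ?thesis using continuous_closedin_preimage[OF mobius_cont[OF A'] C(1)] by simp
qed


theorem corollary2p6:
  fixes G :: "mat2 set"
  assumes "fuchsian G"
    and "\<not> finitely_generated_psl G"
    and "\<forall>A\<in>G. \<not> elliptic A"
  shows "\<not> (\<exists>F G0. locally_finite_fd G F \<and> finite G0 \<and> geodesic_cover G F G0)"
proof
  assume "\<exists>F G0. locally_finite_fd G F \<and> finite G0 \<and> geodesic_cover G F G0"
  then obtain F G0 where lf: "locally_finite_fd G F" and fin: "finite G0" and gc: "geodesic_cover G F G0"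
    by blast
  have GSL: "G \<subseteq> SL2" and G1: "mat 1 \<in> G" and Gm1: "- mat 1 \<in> G"
    and Gmul: "\<And>A B. A \<in> G \<Longrightarrow> B \<in> G \<Longrightarrow> A ** B \<in> G"
    and Ginv: "\<And>A. A \<in> G \<Longrightarrow> matrix_inv A \<in> G"
    using assms(1) by (auto simp: fuchsian_def psl2_subgroup_def)
  have Gdet: "\<And>A. A \<in> G \<Longrightarrow> det A = 1" using GSL by (auto simp: SL2_def)
  let ?H = upper_half_plane
  have FH: "F \<subseteq> ?H" and Fcl: "closedin (top_of_set ?H) F"
    and cover: "(\<Union>A\<in>G. mobius A ` F) = ?H"
    using lf by (auto simp: locally_finite_fd_def fundamental_domain_def)
  have lfin: "\<And>K. compact K \<Longrightarrow> K \<subseteq> ?H \<Longrightarrow> finite {A\<in>G. mobius A ` F \<inter> K \<noteq> {}}"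
    using lf by (auto simp: locally_finite_fd_def)
  have G0G: "G0 \<subseteq> G" and G0ne: "G0 \<noteq> {}"
    and gceq: "\<And>p q. p \<in> F \<Longrightarrow> q \<in> F \<Longrightarrow> (INF A\<in>G. hdist p (mobius A q)) = (INF A\<in>G0. hdist p (mobius A q))"
    using gc by (auto simp: geodesic_cover_def)
  define S where "S = G0 \<union> uminus ` G0"
  have Sfin: "finite S" using fin by (simp add: S_def)
  have SG: "S \<subseteq> G"
  proof
    fix A assume "A \<in> S"
    then consider "A \<in> G0" | B where "B \<in> G0" "A = - B" by (auto simp: S_def)
    thus "A \<in> G"
    proof cases
      case 1 thus ?thesis using G0G by auto
    next
      case 2 thus ?thesis using Gmul[OF Gm1, of B] G0G neg_mul[of B] by auto
    qed
  qed
  have inSL: "\<And>A. A \<in> G \<Longrightarrow> A \<in> SL2" using GSL by auto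
  have N: "M \<in> S" if M: "M \<in> G" and f1: "f1 \<in> F" and f2: "f2 \<in> F" and eq: "mobius M f2 = f1" for M f1 f2
  proof -
    have f1H: "f1 \<in> ?H" and f2H: "f2 \<in> ?H" using f1 f2 FH by auto
    have bdd: "bdd_below ((\<lambda>A. hdist f1 (mobius A f2)) ` G)"
      by (rule bdd_belowI[of _ 0]) (auto intro!: hdist_nonneg f1H Im_mobius inSL f2H)
    have "(INF A\<in>G. hdist f1 (mobius A f2)) \<le> hdist f1 (mobius M f2)"
      by (rule cINF_lower[OF bdd M])
    also have "\<dots> = 0" using eq hdist_self by simp
    finally have le: "(INF A\<in>G0. hdist f1 (mobius A f2)) \<le> 0" using gceq[OF f1 f2] by simp
    have "(INF A\<in>G0. hdist f1 (mobius A f2)) = Min ((\<lambda>A. hdist f1 (mobius A f2)) ` G0)"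
      using fin G0ne by (simp add: cInf_eq_Min)
    also have "\<dots> \<in> (\<lambda>A. hdist f1 (mobius A f2)) ` G0"
      using fin G0ne by (intro Min_in) auto
    finally obtain A0 where A0: "A0 \<in> G0" and h: "hdist f1 (mobius A0 f2) \<le> 0" using le by auto
    have A0G: "A0 \<in> G" using A0 G0G by auto
    have wH: "mobius A0 f2 \<in> ?H" by (rule Im_mobius[OF inSL[OF A0G] f2H])
    have "hdist f1 (mobius A0 f2) = 0" using h hdist_nonneg[OF f1H wH] by simp
    hence same: "mobius A0 f2 = mobius M f2" using hdist_zero[OF f1H wH] eq by simp
    define C where "C = matrix_inv M ** A0"
    have CG: "C \<in> G" unfolding C_def by (intro Gmul Ginv M A0G)
    have "mobius C f2 = mobius (matrix_inv M) (mobius A0 f2)"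
      unfolding C_def by (rule mobius_mult[OF inSL[OF A0G] f2H])
    also have "\<dots> = mobius (matrix_inv M) (mobius M f2)" using same by simp
    also have "\<dots> = mobius (matrix_inv M ** M) f2" by (rule mobius_mult[OF inSL[OF M] f2H, symmetric])
    also have "\<dots> = f2" using minv(2)[OF Gdet[OF M]] mobius_id by simp
    finally have "mobius C f2 = f2" .
    hence Cpm: "C = mat 1 \<or> C = - mat 1"
      using fix_pm[OF inSL[OF CG] _ f2H] assms(3) CG by blast
    have "M ** C = A0" unfolding C_def
      using minv(1)[OF Gdet[OF M]] by (simp add: matrix_mul_assoc)
    with Cpm have "A0 = M \<or> A0 = - M" using mul_neg[of M] by auto
    thus "M \<in> S" using A0 unfolding S_def by (auto intro: image_eqI[of _ _ A0])
  qed
  define Hg where "Hg = generated (insert (- mat 1) S)"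
  have D: "B \<in> Hg" if A: "A \<in> G" and B: "B \<in> G" and zA: "z \<in> mobius A ` F" and zB: "z \<in> mobius B ` F"
      and AH: "A \<in> Hg" for A B z
  proof -
    obtain f1 where f1: "f1 \<in> F" "z = mobius A f1" using zA by auto
    obtain f2 where f2: "f2 \<in> F" "z = mobius B f2" using zB by auto
    have f1H: "f1 \<in> ?H" and f2H: "f2 \<in> ?H" using f1 f2 FH by auto
    have "mobius (matrix_inv A ** B) f2 = mobius (matrix_inv A) (mobius B f2)"
      by (rule mobius_mult[OF inSL[OF B] f2H])
    also have "\<dots> = mobius (matrix_inv A) (mobius A f1)" using f1 f2 by simp
    also have "\<dots> = mobius (matrix_inv A ** A) f1" by (rule mobius_mult[OF inSL[OF A] f1H, symmetric])
    also have "\<dots> = f1" using minv(2)[OF Gdet[OF A]] mobius_id by simp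
    finally have "matrix_inv A ** B \<in> S" using N[of "matrix_inv A ** B" f1 f2] f1 f2 Gmul Ginv A B by blast
    hence "A ** (matrix_inv A ** B) \<in> Hg" unfolding Hg_def using AH[unfolded Hg_def]
      by (intro generated.gen_mult) auto
    moreover have "A ** (matrix_inv A ** B) = B"
      using minv(1)[OF Gdet[OF A]] by (simp add: matrix_mul_assoc)
    ultimately show ?thesis by simp
  qed
  define P where "P z \<longleftrightarrow> (\<exists>A\<in>G. A \<in> Hg \<and> z \<in> mobius A ` F)" for z
  have Piff: "P z \<longleftrightarrow> A \<in> Hg" if "A \<in> G" "z \<in> mobius A ` F" for A z
    using that D unfolding P_def by blast
  have L: "\<exists>e>0. ball a e \<subseteq> ?H \<and> (\<forall>x\<in>ball a e. \<forall>A\<in>G. x \<in> mobius A ` F \<longrightarrow> a \<in> mobius A ` F)"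
    if aH: "a \<in> ?H" for a
  proof -
    have "open ?H" unfolding upper_half_plane_def by (rule open_halfspace_Im_gt)
    then obtain r where r: "r > 0" "cball a r \<subseteq> ?H" using aH open_contains_cball by blast
    define T where "T = {A\<in>G. mobius A ` F \<inter> cball a r \<noteq> {}}"
    have Tfin: "finite T" unfolding T_def using lfin[OF compact_cball r(2)] .
    define T' where "T' = {A\<in>T. a \<notin> mobius A ` F}"
    define C where "C = \<Union>((\<lambda>A. mobius A ` F) ` T')"
    have "closedin (top_of_set ?H) C" unfolding C_def
    proof (rule closedin_Union)
      show "finite ((\<lambda>A. mobius A ` F) ` T')" using Tfin by (simp add: T'_def)
    next
      fix X assume "X \<in> (\<lambda>A. mobius A ` F) ` T'"
      then obtain A where A: "A \<in> G" "X = mobius A ` F" by (auto simp: T'_def T_def)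
      show "closedin (top_of_set ?H) X" unfolding A(2)
        by (rule translate_closed[OF inSL[OF A(1)] inSL[OF Ginv[OF A(1)]]
              minv(1)[OF Gdet[OF A(1)]] minv(2)[OF Gdet[OF A(1)]] FH Fcl])
    qed
    hence "openin (top_of_set ?H) (?H - C)" by (simp add: openin_diff)
    moreover have "a \<in> ?H - C" using aH by (auto simp: C_def T'_def)
    ultimately obtain e' where e': "e' > 0" "ball a e' \<inter> ?H \<subseteq> ?H - C"
      by (auto simp: openin_contains_ball)
    define e where "e = min r e'"
    have sub: "ball a e \<subseteq> cball a r" unfolding e_def by auto
    show ?thesis
    proof (intro exI conjI ballI impI)
      show "e > 0" using r e' by (simp add: e_def)
      show "ball a e \<subseteq> ?H" using sub r by auto
    next
      fix x A assume x: "x \<in> ball a e" and A: "A \<in> G" and xA: "x \<in> mobius A ` F"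
      show "a \<in> mobius A ` F"
      proof (rule ccontr)
        assume na: "a \<notin> mobius A ` F"
        have "A \<in> T" unfolding T_def using A xA x sub by blast
        hence "x \<in> C" unfolding C_def T'_def using na xA by blast
        moreover have "x \<in> ball a e' \<inter> ?H" using x sub r unfolding e_def by auto
        ultimately show False using e' by auto
      qed
    qed
  qed
  have conn: "connected ?H" unfolding upper_half_plane_def
    by (intro convex_connected convex_halfspace_Im_gt)
  have "\<i> \<in> ?H" by (simp add: upper_half_plane_def)
  then obtain A1 f where A1: "A1 \<in> G" and f: "f \<in> F" using cover by auto
  have fH: "f \<in> ?H" using f FH by auto
  have Pf: "P f" unfolding P_def Hg_def
    using G1 f by (intro bexI[of _ "mat 1"]) (auto intro: generated.gen_one simp: mobius_id)
  have GH: "g \<in> Hg" if g: "g \<in> G" for g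
  proof -
    let ?b = "mobius g f"
    have bH: "?b \<in> ?H" by (rule Im_mobius[OF inSL[OF g] fH])
    have "P f = P ?b"
    proof (rule connected_equivalence_relation[OF conn fH bH, where R = "\<lambda>x y. P x = P y"])
      fix a assume aH: "a \<in> ?H"
      obtain e where e: "e > 0" "ball a e \<subseteq> ?H"
        and loc: "\<forall>x\<in>ball a e. \<forall>A\<in>G. x \<in> mobius A ` F \<longrightarrow> a \<in> mobius A ` F"
        using L[OF aH] by blast
      show "\<exists>T. openin (top_of_set ?H) T \<and> a \<in> T \<and> (\<forall>x\<in>T. P a = P x)"
      proof (intro exI conjI ballI)
        show "openin (top_of_set ?H) (ball a e)" using e(2) by (simp add: open_subset)
        show "a \<in> ball a e" using e(1) by simp
      next
        fix x assume x: "x \<in> ball a e"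
        then have "x \<in> ?H" using e by auto
        then have "x \<in> (\<Union>A\<in>G. mobius A ` F)" using cover by simp
        then obtain A where A: "A \<in> G" "x \<in> mobius A ` F" by blast
        then have "a \<in> mobius A ` F" using loc x by blast
        thus "P a = P x" using Piff[OF A(1)] A(2) by simp
      qed
    qed auto
    hence "P ?b" using Pf by simp
    thus ?thesis using Piff[OF g] f by auto
  qed
  have HG: "Hg \<subseteq> G"
  proof
    fix A assume "A \<in> Hg"
    thus "A \<in> G" unfolding Hg_def
    proof (induction rule: generated.induct)
      case gen_one thus ?case using G1 .
    next
      case (gen_mult A s) thus ?case using SG Gm1 by (auto intro: Gmul)
    next
      case (gen_mult_inv A s) thus ?case using SG Gm1 by (auto intro: Gmul Ginv)
    qed
  qed
  have "finitely_generated_psl G"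
    unfolding finitely_generated_psl_def
    using Sfin SG GH HG unfolding Hg_def by blast
  with assms(2) show False by contradiction
qed

end
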